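(* Let $V^{\bullet\bullet}$ be an $N=2$ supersymmetric complex whose bigrading satisfies $V^{ij}=0$ for $i\ll0$ or $j\ll0$. Then the total complex $\mathrm{Tot}(V^{\bullet\bullet})$ (with differential $D_1+D_2$) is quasi-isomorphic to the $0$th row $(V^{\bullet,0},D_1)$ and to the $0$th column $(V^{0,\bullet},D_2)$.
   Context: Let $G=\underline{\mathrm{Aut}}(\mathbb A^{0|2})$ be the group super-scheme of automorphisms of $\mathrm{Spec}\,\Lambda[\eta_1,\eta_2]$ ($\eta_i$ odd), isomorphic to $SL_{1|2}$, with Lie superalgebra $\mathrm{Der}\,\Lambda[\eta_1,\eta_2]$. An $N=2$ supersymmetric complex is a super vector space $V$ with a $G$-action. The torus $\mathbb G_m\times\mathbb G_m$ (substitutions $\eta_i\mapsto b_i\eta_i$) gives a bigrading $V=\bigoplus V^{ij}$ with $\eta_1\partial/\partial\eta_1$ acting by $i$ and $\eta_2\partial/\partial\eta_2$ by $j$; $D_1=\partial/\partial\eta_1$ and $D_2=\partial/\partial\eta_2$ act as anticommuting square-zero differentials of bidegrees $(1,0)$ and $(0,1)$, making $V^{\bullet\bullet}$ a double complex. *)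

theory Defs
  imports Complex_Main
begin

text \<open>An element of the Grassmann algebra k[eta1,eta2] (eta_i odd) is given by its
coefficients: f (a,b) is the coefficient of the monomial eta1^a eta2^b
(a, b in bool, True = exponent 1).\<close>

type_synonym 'k grass = "bool \<times> bool \<Rightarrow> 'k"

definition gadd :: "'k::field grass \<Rightarrow> 'k grass \<Rightarrow> 'k grass" where
  "gadd f g = (\<lambda>m. f m + g m)"

definition gscale :: "'k::field \<Rightarrow> 'k grass \<Rightarrow> 'k grass" where
  "gscale c f = (\<lambda>m. c * f m)"

text \<open>Product, using eta2 * eta1 = - eta1 * eta2 and eta_i^2 = 0.\<close>
definition gmul :: "'k::field grass \<Rightarrow> 'k grass \<Rightarrow> 'k grass" where
  "gmul f g = (\<lambda>(c1, c2).
     if \<not> c1 \<and> \<not> c2 then f (False, False) * g (False, False)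
     else if c1 \<and> \<not> c2 then f (True, False) * g (False, False) + f (False, False) * g (True, False)
     else if \<not> c1 \<and> c2 then f (False, True) * g (False, False) + f (False, False) * g (False, True)
     else f (True, True) * g (False, False) + f (False, False) * g (True, True)
          + f (True, False) * g (False, True) - f (False, True) * g (True, False))"

definition eta1 :: "'k::field grass" where
  "eta1 = (\<lambda>m. if m = (True, False) then 1 else 0)"
definition eta2 :: "'k::field grass" where
  "eta2 = (\<lambda>m. if m = (False, True) then 1 else 0)"

definition mon_parity :: "bool \<times> bool \<Rightarrow> bool" where
  "mon_parity m = (fst m \<noteq> snd m)"

definition ghomog :: "bool \<Rightarrow> 'k::field grass \<Rightarrow> bool" where
  "ghomog p f \<longleftrightarrow> (\<forall>m. f m \<noteq> 0 \<longrightarrow> mon_parity m = p)"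

definition ssign :: "bool \<Rightarrow> bool \<Rightarrow> 'k::field" where
  "ssign p q = (if p \<and> q then -1 else 1)"

text \<open>Superderivations of parity p (False = even, True = odd).\<close>
definition sder :: "bool \<Rightarrow> ('k::field grass \<Rightarrow> 'k grass) \<Rightarrow> bool" where
  "sder p D \<longleftrightarrow>
     (\<forall>f g. D (gadd f g) = gadd (D f) (D g)) \<and>
     (\<forall>c f. D (gscale c f) = gscale c (D f)) \<and>
     (\<forall>q f. ghomog q f \<longrightarrow> ghomog (q \<noteq> p) (D f)) \<and>
     (\<forall>q f g. ghomog q f \<longrightarrow>
        D (gmul f g) = gadd (gmul (D f) g) (gscale (ssign p q) (gmul f (D g))))"

definition Der :: "('k::field grass \<Rightarrow> 'k grass) set" where
  "Der = {D. \<exists>D0 D1. sder False D0 \<and> sder True D1 \<and> D = (\<lambda>h. gadd (D0 h) (D1 h))}"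

text \<open>Partial derivatives d/d eta1, d/d eta2 (left derivatives).\<close>
definition del1 :: "'k::field grass \<Rightarrow> 'k grass" where
  "del1 h = (\<lambda>(a, b). if a then 0 else h (True, b))"
definition del2 :: "'k::field grass \<Rightarrow> 'k grass" where
  "del2 h = (\<lambda>(a, b). if b then 0 else (if a then -1 else 1) * h (a, True))"

definition E11 :: "'k::field grass \<Rightarrow> 'k grass" where
  "E11 h = gmul eta1 (del1 h)"
definition E22 :: "'k::field grass \<Rightarrow> 'k grass" where
  "E22 h = gmul eta2 (del2 h)"

definition lin_on :: "('k::field \<Rightarrow> 'v::ab_group_add \<Rightarrow> 'v) \<Rightarrow> 'v set \<Rightarrow> ('v \<Rightarrow> 'v) \<Rightarrow> bool" where
  "lin_on s U f \<longleftrightarrow> (\<forall>x\<in>U. \<forall>y\<in>U. f (x + y) = f x + f y) \<and> (\<forall>c. \<forall>x\<in>U. f (s c x) = s c (f x))"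

text \<open>A super vector space V (ambient type 'v, scalar multiplication s) with parity
decomposition V = Vpar False (+) Vpar True, a bigrading V = (+)_{ij} Vg i j compatible with
parity, and an action rho of the group superscheme G = Aut(A^{0|2}) presented as a
Harish-Chandra pair (char 0): an (infinitesimal) action of Der k[eta1,eta2] whose even part
gl_2 acts locally finitely and whose Euler fields eta_i d/d eta_i act on V^{ij} by i and j.
With the grading convention of the paper (D1 = rho(d/d eta1) of bidegree (1,0)) the
infinitesimal action reverses brackets: rho [X,Y] = - [rho X, rho Y].\<close>

definition N2_susy_complex ::
  "('k::field_char_0 \<Rightarrow> 'v::ab_group_add \<Rightarrow> 'v) \<Rightarrow> (bool \<Rightarrow> 'v set) \<Rightarrow> (int \<Rightarrow> int \<Rightarrow> 'v set)
   \<Rightarrow> (('k grass \<Rightarrow> 'k grass) \<Rightarrow> 'v \<Rightarrow> 'v) \<Rightarrow> bool" where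
  "N2_susy_complex s Vpar Vg \<rho> \<longleftrightarrow>
     vector_space s \<and>
     \<comment> \<open>super vector space structure\<close>
     (\<forall>p. module.subspace s (Vpar p)) \<and>
     (\<forall>v. \<exists>!(a, b). a \<in> Vpar False \<and> b \<in> Vpar True \<and> v = a + b) \<and>
     \<comment> \<open>bigrading: V is the direct sum of the Vg i j\<close>
     (\<forall>i j. module.subspace s (Vg i j)) \<and>
     (\<forall>v. \<exists>!c :: int \<times> int \<Rightarrow> 'v. finite {ij. c ij \<noteq> 0} \<and> (\<forall>i j. c (i, j) \<in> Vg i j)
            \<and> v = sum c {ij. c ij \<noteq> 0}) \<and>
     (\<forall>i j v. v \<in> Vg i j \<longrightarrow>
        (\<exists>a b. a \<in> Vg i j \<inter> Vpar False \<and> b \<in> Vg i j \<inter> Vpar True \<and> v = a + b)) \<and>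
     \<comment> \<open>rho is linear on Der\<close>
     (\<forall>D\<in>Der. \<forall>E\<in>Der. \<rho> (\<lambda>h. gadd (D h) (E h)) = (\<lambda>v. \<rho> D v + \<rho> E v)) \<and>
     (\<forall>D\<in>Der. \<forall>c. \<rho> (\<lambda>h. gscale c (D h)) = (\<lambda>v. s c (\<rho> D v))) \<and>
     \<comment> \<open>homogeneous elements act by linear operators of the same parity\<close>
     (\<forall>p D. sder p D \<longrightarrow> lin_on s UNIV (\<rho> D) \<and>
        (\<forall>q v. v \<in> Vpar q \<longrightarrow> \<rho> D v \<in> Vpar (q \<noteq> p))) \<and>
     \<comment> \<open>compatibility with the super bracket\<close>
     (\<forall>p q D E. sder p D \<longrightarrow> sder q E \<longrightarrow>
        \<rho> (\<lambda>h. gadd (D (E h)) (gscale (- ssign p q) (E (D h))))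
          = (\<lambda>v. - (\<rho> D (\<rho> E v) - s (ssign p q) (\<rho> E (\<rho> D v))))) \<and>
     \<comment> \<open>the torus G_m x G_m gives the bigrading\<close>
     (\<forall>i j v. v \<in> Vg i j \<longrightarrow> \<rho> E11 v = s (of_int i) v \<and> \<rho> E22 v = s (of_int j) v) \<and>
     \<comment> \<open>integrability of the even part gl_2: local finiteness\<close>
     (\<forall>v. \<exists>B. finite B \<and> v \<in> module.span s B \<and>
        (\<forall>D. sder False D \<longrightarrow> (\<forall>w\<in>module.span s B. \<rho> D w \<in> module.span s B)))"

definition cochain_complex :: "('k::field \<Rightarrow> 'v::ab_group_add \<Rightarrow> 'v) \<Rightarrow> (int \<Rightarrow> 'v set) \<Rightarrow> ('v \<Rightarrow> 'v) \<Rightarrow> bool" where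
  "cochain_complex s C d \<longleftrightarrow>
     (\<forall>n. module.subspace s (C n) \<and> lin_on s (C n) d \<and> d ` C n \<subseteq> C (n + 1) \<and>
          (\<forall>x\<in>C n. d (d x) = 0))"

definition quasi_iso :: "('k::field \<Rightarrow> 'v::ab_group_add \<Rightarrow> 'v) \<Rightarrow> (int \<Rightarrow> 'v set) \<Rightarrow> ('v \<Rightarrow> 'v)
    \<Rightarrow> (int \<Rightarrow> 'v set) \<Rightarrow> ('v \<Rightarrow> 'v) \<Rightarrow> ('v \<Rightarrow> 'v) \<Rightarrow> bool" where
  "quasi_iso s C d C' d' f \<longleftrightarrow>
     cochain_complex s C d \<and> cochain_complex s C' d' \<and>
     (\<forall>n. lin_on s (C n) f \<and> f ` C n \<subseteq> C' n \<and> (\<forall>x\<in>C n. f (d x) = d' (f x))) \<and>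
     \<comment> \<open>injective on cohomology\<close>
     (\<forall>n z. z \<in> C n \<and> d z = 0 \<and> (\<exists>y\<in>C' (n - 1). f z = d' y) \<longrightarrow> (\<exists>y\<in>C (n - 1). z = d y)) \<and>
     \<comment> \<open>surjective on cohomology\<close>
     (\<forall>n w. w \<in> C' n \<and> d' w = 0 \<longrightarrow>
        (\<exists>z\<in>C n. d z = 0 \<and> (\<exists>y\<in>C' (n - 1). w = f z + d' y)))"

text \<open>Quasi-isomorphic: related by the equivalence relation generated by quasi-isomorphisms
(zig-zags of quasi-isomorphisms), among complexes of subspaces of the ambient space.\<close>
definition quasi_isomorphic :: "('k::field \<Rightarrow> 'v::ab_group_add \<Rightarrow> 'v) \<Rightarrow> (int \<Rightarrow> 'v set) \<Rightarrow> ('v \<Rightarrow> 'v)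
    \<Rightarrow> (int \<Rightarrow> 'v set) \<Rightarrow> ('v \<Rightarrow> 'v) \<Rightarrow> bool" where
  "quasi_isomorphic s C d C' d' \<longleftrightarrow>
     equivclp (\<lambda>(A, dA) (B, dB). \<exists>f. quasi_iso s A dA B dB f) (C, d) (C', d')"

definition Tot :: "('k::field \<Rightarrow> 'v::ab_group_add \<Rightarrow> 'v) \<Rightarrow> (int \<Rightarrow> int \<Rightarrow> 'v set) \<Rightarrow> int \<Rightarrow> 'v set" where
  "Tot s Vg n = module.span s (\<Union>{Vg i j | i j. i + j = n})"

definition row0 :: "(int \<Rightarrow> int \<Rightarrow> 'v set) \<Rightarrow> int \<Rightarrow> 'v set" where
  "row0 Vg n = Vg n 0"

definition col0 :: "(int \<Rightarrow> int \<Rightarrow> 'v set) \<Rightarrow> int \<Rightarrow> 'v set" where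
  "col0 Vg n = Vg 0 n"

end

theory Submission
  imports Defs
begin


lemma ghomog_iff: "ghomog q f \<longleftrightarrow> (if q then f (False,False) = 0 \<and> f (True,True) = 0
   else f (True,False) = 0 \<and> f (False,True) = 0)"
  unfolding ghomog_def mon_parity_def
  apply (cases q; auto)
  apply (metis (full_types) prod.collapse)+
  done

definition a1 :: "'k::field grass \<Rightarrow> 'k grass" where "a1 h = gmul eta2 (del1 h)"
definition a2 :: "'k::field grass \<Rightarrow> 'k grass" where "a2 h = gmul eta1 (del2 h)"
definition k1 :: "'k::field grass \<Rightarrow> 'k grass" where "k1 h = gmul (gmul eta1 eta2) (del1 h)"
definition k2 :: "'k::field grass \<Rightarrow> 'k grass" where "k2 h = gmul (gmul eta1 eta2) (del2 h)"

lemmas gdefs = gadd_def gscale_def gmul_def eta1_def eta2_def del1_def del2_def E11_def E22_def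
  a1_def a2_def k1_def k2_def ssign_def

lemma fe4: "(f::bool\<times>bool\<Rightarrow>'a) = g \<longleftrightarrow> f (False,False) = g (False,False) \<and> f (True,False) = g (True,False)
  \<and> f (False,True) = g (False,True) \<and> f (True,True) = g (True,True)"
  apply (auto simp: fun_eq_iff)
  by (metis (full_types) prod.collapse)

lemma sder_del1: "sder True (del1::'k::field grass \<Rightarrow> _)"
  unfolding sder_def apply (intro conjI allI impI)

  by (simp_all add: fe4 gdefs ghomog_iff split: if_splits)
lemma sder_del2: "sder True (del2::'k::field grass \<Rightarrow> _)"
  unfolding sder_def apply (intro conjI allI impI)

  by (simp_all add: fe4 gdefs ghomog_iff split: if_splits)
lemma sder_k1: "sder True (k1::'k::field grass \<Rightarrow> _)"
  unfolding sder_def apply (intro conjI allI impI)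

  by (simp_all add: fe4 gdefs ghomog_iff split: if_splits)
lemma sder_k2: "sder True (k2::'k::field grass \<Rightarrow> _)"
  unfolding sder_def apply (intro conjI allI impI)

  by (simp_all add: fe4 gdefs ghomog_iff split: if_splits)
lemma sder_a1: "sder False (a1::'k::field grass \<Rightarrow> _)"
  unfolding sder_def apply (intro conjI allI impI)

  by (simp_all add: fe4 gdefs ghomog_iff split: if_splits)
lemma sder_a2: "sder False (a2::'k::field grass \<Rightarrow> _)"
  unfolding sder_def apply (intro conjI allI impI)

  by (simp_all add: fe4 gdefs ghomog_iff split: if_splits)
lemma sder_E11: "sder False (E11::'k::field grass \<Rightarrow> _)"
  unfolding sder_def apply (intro conjI allI impI)

  by (simp_all add: fe4 gdefs ghomog_iff split: if_splits)
lemma sder_E22: "sder False (E22::'k::field grass \<Rightarrow> _)"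
  unfolding sder_def apply (intro conjI allI impI)

  by (simp_all add: fe4 gdefs ghomog_iff split: if_splits)

definition Br :: "bool \<Rightarrow> bool \<Rightarrow> ('k::field grass \<Rightarrow> 'k grass) \<Rightarrow> ('k grass \<Rightarrow> 'k grass) \<Rightarrow> 'k grass \<Rightarrow> 'k grass" where
  "Br p q D E = (\<lambda>h. gadd (D (E h)) (gscale (- ssign p q) (E (D h))))"

lemma Br_eq: "Br p q D E = (\<lambda>h. gscale c (X h)) \<longleftrightarrow> (\<forall>h. gadd (D (E h)) (gscale (- ssign p q) (E (D h))) = gscale c (X h))"
  unfolding Br_def by (simp add: fun_eq_iff)

lemma B1: "Br True True del1 del1 = (\<lambda>h. gscale (0::'k::field) (del1 h))"
  unfolding Br_eq by (simp add: fe4 gdefs)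
lemma B2: "Br True True del2 del2 = (\<lambda>h. gscale (0::'k::field) (del2 h))"
  unfolding Br_eq by (simp add: fe4 gdefs)
lemma B3: "Br True True del1 del2 = (\<lambda>h. gscale (0::'k::field) (del1 h))"
  unfolding Br_eq by (simp add: fe4 gdefs)
lemma B4: "Br False True a1 del2 = (\<lambda>h. gscale (-1::'k::field) (del1 h))"
  unfolding Br_eq by (simp add: fe4 gdefs)
lemma B5: "Br False True a1 del1 = (\<lambda>h. gscale (0::'k::field) (del1 h))"
  unfolding Br_eq by (simp add: fe4 gdefs)
lemma B6: "Br True True del2 k1 = (\<lambda>h. gscale (-1::'k::field) (E11 h))"
  unfolding Br_eq by (simp add: fe4 gdefs)
lemma B7: "Br False True a2 del1 = (\<lambda>h. gscale (-1::'k::field) (del2 h))"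
  unfolding Br_eq by (simp add: fe4 gdefs)
lemma B8: "Br False True a2 del2 = (\<lambda>h. gscale (0::'k::field) (del1 h))"
  unfolding Br_eq by (simp add: fe4 gdefs)
lemma B9: "Br True True del1 k2 = (\<lambda>h. gscale (1::'k::field) (E22 h))"
  unfolding Br_eq by (simp add: fe4 gdefs)
lemma e11d1: "Br False True E11 del1 = (\<lambda>h. gscale (of_int (-1)::'k::field) (del1 h))"
  unfolding Br_eq by (simp add: fe4 gdefs)
lemma e11d2: "Br False True E11 del2 = (\<lambda>h. gscale (of_int (0)::'k::field) (del2 h))"
  unfolding Br_eq by (simp add: fe4 gdefs)
lemma e11a1: "Br False False E11 a1 = (\<lambda>h. gscale (of_int (-1)::'k::field) (a1 h))"
  unfolding Br_eq by (simp add: fe4 gdefs)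
lemma e11k1: "Br False True E11 k1 = (\<lambda>h. gscale (of_int (0)::'k::field) (k1 h))"
  unfolding Br_eq by (simp add: fe4 gdefs)
lemma e11a2: "Br False False E11 a2 = (\<lambda>h. gscale (of_int (1)::'k::field) (a2 h))"
  unfolding Br_eq by (simp add: fe4 gdefs)
lemma e11k2: "Br False True E11 k2 = (\<lambda>h. gscale (of_int (1)::'k::field) (k2 h))"
  unfolding Br_eq by (simp add: fe4 gdefs)
lemma e22d1: "Br False True E22 del1 = (\<lambda>h. gscale (of_int (0)::'k::field) (del1 h))"
  unfolding Br_eq by (simp add: fe4 gdefs)
lemma e22d2: "Br False True E22 del2 = (\<lambda>h. gscale (of_int (-1)::'k::field) (del2 h))"
  unfolding Br_eq by (simp add: fe4 gdefs)
lemma e22a1: "Br False False E22 a1 = (\<lambda>h. gscale (of_int (1)::'k::field) (a1 h))"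
  unfolding Br_eq by (simp add: fe4 gdefs)
lemma e22k1: "Br False True E22 k1 = (\<lambda>h. gscale (of_int (1)::'k::field) (k1 h))"
  unfolding Br_eq by (simp add: fe4 gdefs)
lemma e22a2: "Br False False E22 a2 = (\<lambda>h. gscale (of_int (-1)::'k::field) (a2 h))"
  unfolding Br_eq by (simp add: fe4 gdefs)
lemma e22k2: "Br False True E22 k2 = (\<lambda>h. gscale (of_int (0)::'k::field) (k2 h))"
  unfolding Br_eq by (simp add: fe4 gdefs)


locale qs0 = vector_space s for s :: "'k::field_char_0 \<Rightarrow> 'v::ab_group_add \<Rightarrow> 'v" +
  fixes Vg :: "int \<Rightarrow> int \<Rightarrow> 'v set" and N :: int
  assumes subVg: "subspace (Vg i j)"
    and decex: "\<exists>!cc. finite {ij. cc ij \<noteq> 0} \<and> (\<forall>i j. cc (i,j) \<in> Vg i j) \<and> v = sum cc {ij. cc ij \<noteq> 0}"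
    and bnd: "i < N \<or> j < N \<Longrightarrow> Vg i j = {0}"
begin

definition dec :: "'v \<Rightarrow> int \<times> int \<Rightarrow> 'v" where
  "dec v = (THE cc. finite {ij. cc ij \<noteq> 0} \<and> (\<forall>i j. cc (i,j) \<in> Vg i j) \<and> v = sum cc {ij. cc ij \<noteq> 0})"

lemma dec_prop: "finite {ij. dec v ij \<noteq> 0} \<and> (\<forall>i j. dec v (i,j) \<in> Vg i j) \<and> v = sum (dec v) {ij. dec v ij \<noteq> 0}"
  unfolding dec_def by (rule theI'[OF decex])

lemma dec_in: "dec v (i,j) \<in> Vg i j" using dec_prop by blast

lemma dec_fin: "finite {ij. dec v ij \<noteq> 0}" using dec_prop by blast

lemma dec_sum_S: assumes "finite S" "{ij. dec v ij \<noteq> 0} \<subseteq> S" shows "v = sum (dec v) S"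
proof -
  have "sum (dec v) S = sum (dec v) {ij. dec v ij \<noteq> 0}"
    by (rule sum.mono_neutral_right[OF assms(1) assms(2)]) auto
  thus ?thesis using dec_prop by metis
qed

lemma dec_unique:
  assumes "finite S" "\<And>i j. cc (i,j) \<in> Vg i j" "\<And>k. k \<notin> S \<Longrightarrow> cc k = 0" "v = sum cc S"
  shows "dec v = cc"
proof -
  have sub: "{ij. cc ij \<noteq> 0} \<subseteq> S" using assms(3) by blast
  have fin: "finite {ij. cc ij \<noteq> 0}" using finite_subset[OF sub assms(1)] .
  have "sum cc S = sum cc {ij. cc ij \<noteq> 0}"
    by (rule sum.mono_neutral_right[OF assms(1) sub]) auto
  hence "finite {ij. cc ij \<noteq> 0} \<and> (\<forall>i j. cc (i,j) \<in> Vg i j) \<and> v = sum cc {ij. cc ij \<noteq> 0}"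
    using fin assms by auto
  thus ?thesis unfolding dec_def by (rule the1_equality[OF decex])
qed

lemma dec_add: "dec (x + y) = (\<lambda>k. dec x k + dec y k)"
proof (rule dec_unique[of "{ij. dec x ij \<noteq> 0} \<union> {ij. dec y ij \<noteq> 0}"])
  show "finite ({ij. dec x ij \<noteq> 0} \<union> {ij. dec y ij \<noteq> 0})" by (simp add: dec_fin)
  show "dec x (i,j) + dec y (i,j) \<in> Vg i j" for i j by (rule subspace_add[OF subVg dec_in dec_in])
  show "k \<notin> {ij. dec x ij \<noteq> 0} \<union> {ij. dec y ij \<noteq> 0} \<Longrightarrow> dec x k + dec y k = 0" for k by auto
  have "x = sum (dec x) ({ij. dec x ij \<noteq> 0} \<union> {ij. dec y ij \<noteq> 0})"
    by (rule dec_sum_S) (auto simp: dec_fin)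
  moreover have "y = sum (dec y) ({ij. dec x ij \<noteq> 0} \<union> {ij. dec y ij \<noteq> 0})"
    by (rule dec_sum_S) (auto simp: dec_fin)
  ultimately show "x + y = (\<Sum>k\<in>{ij. dec x ij \<noteq> 0} \<union> {ij. dec y ij \<noteq> 0}. dec x k + dec y k)"
    by (simp add: sum.distrib)
qed

lemma dec_scale: "dec (s a x) = (\<lambda>k. s a (dec x k))"
proof (rule dec_unique[of "{ij. dec x ij \<noteq> 0}"])
  show "finite {ij. dec x ij \<noteq> 0}" by (simp add: dec_fin)
  show "s a (dec x (i,j)) \<in> Vg i j" for i j by (rule subspace_scale[OF subVg dec_in])
  show "k \<notin> {ij. dec x ij \<noteq> 0} \<Longrightarrow> s a (dec x k) = 0" for k by auto
  show "s a x = (\<Sum>k\<in>{ij. dec x ij \<noteq> 0}. s a (dec x k))"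
    using dec_prop[of x] by (metis scale_sum_right)
qed

lemma dec_zero: "dec 0 = (\<lambda>k. 0)"
  by (rule dec_unique[of "{}"]) (auto intro: subspace_0[OF subVg])

lemma dec_minus: "dec (- x) = (\<lambda>k. - dec x k)"
  using dec_scale[of "-1" x] by simp

lemma dec_diff: "dec (x - y) = (\<lambda>k. dec x k - dec y k)"
  using dec_add[of x "- y"] dec_minus[of y] by simp

lemma dec_single: assumes "v \<in> Vg i j" shows "dec v = (\<lambda>k. if k = (i,j) then v else 0)"
  by (rule dec_unique[of "{(i,j)}"]) (auto intro: subspace_0[OF subVg] simp: assms)

lemma dec_zeroD: assumes "\<And>k. dec v k = 0" shows "v = 0"
  using dec_prop[of v] assms by simp

lemma dec_sum: "finite I \<Longrightarrow> dec (sum g I) = (\<lambda>k. \<Sum>i\<in>I. dec (g i) k)"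
  by (induct I rule: finite_induct) (auto simp: dec_zero dec_add)

lemma dec_op:
  assumes add: "\<And>x y. X (x + y) = X x + X y"
    and deg: "\<And>i j v. v \<in> Vg i j \<Longrightarrow> X v \<in> Vg (i+a) (j+b)"
  shows "dec (X v) (i,j) = X (dec v (i-a, j-b))"
proof -
  interpret X: additive X by unfold_locales (rule add)
  let ?S = "{ij. dec v ij \<noteq> 0}"
  have fin: "finite ?S" by (rule dec_fin)
  have "X v = X (sum (dec v) ?S)" using dec_prop by metis
  also have "\<dots> = (\<Sum>k\<in>?S. X (dec v k))" by (rule X.sum)
  finally have "dec (X v) (i,j) = (\<Sum>k\<in>?S. dec (X (dec v k)) (i,j))" using dec_sum[OF fin] by simp
  also have "\<dots> = (\<Sum>k\<in>?S. if k = (i-a, j-b) then X (dec v k) else 0)"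
  proof (rule sum.cong[OF refl])
    fix k assume "k \<in> ?S"
    obtain p q where k: "k = (p,q)" by force
    have "dec (X (dec v k)) = (\<lambda>k'. if k' = (p+a,q+b) then X (dec v k) else 0)"
      unfolding k by (rule dec_single[OF deg[OF dec_in]])
    moreover have "((i,j) = (p+a,q+b)) = (k = (i-a,j-b))" unfolding k by auto
    ultimately show "dec (X (dec v k)) (i,j) = (if k = (i-a, j-b) then X (dec v k) else 0)" by simp
  qed
  also have "\<dots> = X (dec v (i-a, j-b))"
    by (simp add: sum.delta[OF fin] X.zero)
  finally show ?thesis .
qed

definition supp_in :: "(int \<times> int \<Rightarrow> bool) \<Rightarrow> 'v set" where
  "supp_in R = {v. \<forall>k. dec v k \<noteq> 0 \<longrightarrow> R k}"

lemma supp_inI: "(\<And>i j. dec v (i,j) \<noteq> 0 \<Longrightarrow> R (i,j)) \<Longrightarrow> v \<in> supp_in R"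
  unfolding supp_in_def by auto

lemma supp_inD: "v \<in> supp_in R \<Longrightarrow> dec v (i,j) \<noteq> 0 \<Longrightarrow> R (i,j)"
  unfolding supp_in_def by auto

lemma subspace_supp: "subspace (supp_in R)"
  unfolding subspace_def supp_in_def
  apply (auto simp: dec_zero dec_add dec_scale)
  apply (metis add.right_neutral)
  done

lemma supp_mono: "(\<And>k. R k \<Longrightarrow> R' k) \<Longrightarrow> supp_in R \<subseteq> supp_in R'"
  unfolding supp_in_def by auto

lemma single_supp: "v \<in> Vg i j \<Longrightarrow> R (i,j) \<Longrightarrow> v \<in> supp_in R"
  unfolding supp_in_def by (auto simp: dec_single)

lemma dec_nz_bnd: "dec v (i,j) \<noteq> 0 \<Longrightarrow> N \<le> i \<and> N \<le> j"
  using dec_in[of v i j] bnd[of i j] by force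

lemma span_eq: "span (\<Union>{Vg i j | i j. i + j = n}) = supp_in (\<lambda>k. fst k + snd k = n)"
proof
  show "span (\<Union>{Vg i j | i j. i + j = n}) \<subseteq> supp_in (\<lambda>k. fst k + snd k = n)"
    by (rule span_minimal[OF _ subspace_supp]) (auto intro: single_supp)
  show "supp_in (\<lambda>k. fst k + snd k = n) \<subseteq> span (\<Union>{Vg i j | i j. i + j = n})"
  proof
    fix v assume v: "v \<in> supp_in (\<lambda>k. fst k + snd k = n)"
    have "v = sum (dec v) {ij. dec v ij \<noteq> 0}" using dec_prop by metis
    also have "\<dots> \<in> span (\<Union>{Vg i j | i j. i + j = n})"
    proof (rule span_sum)
      fix k assume "k \<in> {ij. dec v ij \<noteq> 0}"
      obtain i j where k: "k = (i,j)" by force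
      have "dec v (i,j) \<noteq> 0" using \<open>k \<in> _\<close> k by simp
      hence "i + j = n" using supp_inD[OF v] by force
      hence "dec v (i,j) \<in> \<Union>{Vg i j | i j. i + j = n}" using dec_in by blast
      thus "dec v k \<in> span (\<Union>{Vg i j | i j. i + j = n})" using k span_base by simp
    qed
    finally show "v \<in> span (\<Union>{Vg i j | i j. i + j = n})" .
  qed
qed

lemma scale_two: "s 2 x = x + x"
  using scale_left_distrib[of 1 1 x] by (simp add: one_add_one)

lemma scale_cancel: assumes "r \<noteq> 0" "s r x = 0" shows "x = 0"
proof -
  have "x = s (inverse r) (s r x)" using assms(1) by simp
  thus ?thesis using assms(2) by simp
qed

lemma scale_eq_cancel: assumes "s a x = s b x" "a \<noteq> b" shows "x = 0"
  using scale_cancel[of "a - b" x] assms by (simp add: scale_left_diff_distrib)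

lemma eigen:
  assumes a1: "\<And>x y. E1 (x+y) = E1 x + E1 y" and a2: "\<And>x y. E2 (x+y) = E2 x + E2 y"
    and e1: "\<And>i j v. v \<in> Vg i j \<Longrightarrow> E1 v = s (of_int i) v"
    and e2: "\<And>i j v. v \<in> Vg i j \<Longrightarrow> E2 v = s (of_int j) v"
    and w1: "E1 w = s (of_int p) w" and w2: "E2 w = s (of_int q) w"
  shows "w \<in> Vg p q"
proof -
  have d1: "dec (E1 w) (i,j) = s (of_int i) (dec w (i,j))" for i j
    using dec_op[OF a1, of 0 0 w i j] e1[OF dec_in] subspace_scale[OF subVg] e1 by simp
  have d2: "dec (E2 w) (i,j) = s (of_int j) (dec w (i,j))" for i j
    using dec_op[OF a2, of 0 0 w i j] e2[OF dec_in] subspace_scale[OF subVg] e2 by simp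
  have z: "dec w (i,j) = 0" if "(i,j) \<noteq> (p,q)" for i j
  proof (cases "i = p")
    case False
    have "s (of_int i) (dec w (i,j)) = s (of_int p) (dec w (i,j))"
      using d1[of i j] w1 dec_scale by metis
    thus ?thesis by (rule scale_eq_cancel) (use False in simp)
  next
    case True
    hence "j \<noteq> q" using that by simp
    have "s (of_int j) (dec w (i,j)) = s (of_int q) (dec w (i,j))"
      using d2[of i j] w2 dec_scale by metis
    thus ?thesis by (rule scale_eq_cancel) (use \<open>j \<noteq> q\<close> in simp)
  qed
  have "w = sum (dec w) {(p,q)}" by (rule dec_sum_S) (use z in auto)
  thus ?thesis using dec_in[of w p q] by simp
qed

end


locale qs = qs0 s Vg N for s :: "'k::field_char_0 \<Rightarrow> 'v::ab_group_add \<Rightarrow> 'v" and Vg N +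
  fixes P Q A K :: "'v \<Rightarrow> 'v" and c :: 'k
  assumes Padd: "P (x + y) = P x + P y" and Pscale: "P (s a x) = s a (P x)"
    and Qadd: "Q (x + y) = Q x + Q y" and Qscale: "Q (s a x) = s a (Q x)"
    and Aadd: "A (x + y) = A x + A y" and Ascale: "A (s a x) = s a (A x)"
    and Kadd: "K (x + y) = K x + K y" and Kscale: "K (s a x) = s a (K x)"
    and Pdeg: "v \<in> Vg i j \<Longrightarrow> P v \<in> Vg (i+1) j"
    and Qdeg: "v \<in> Vg i j \<Longrightarrow> Q v \<in> Vg i (j+1)"
    and Adeg: "v \<in> Vg i j \<Longrightarrow> A v \<in> Vg (i+1) (j-1)"
    and Kdeg: "v \<in> Vg i j \<Longrightarrow> K v \<in> Vg i (j-1)"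
    and PP: "P (P v) = 0" and QQ: "Q (Q v) = 0" and PQ: "P (Q v) + Q (P v) = 0"
    and AQ: "A (Q v) - Q (A v) = P v" and AP: "A (P v) = P (A v)"
    and QK: "v \<in> Vg i j \<Longrightarrow> Q (K v) + K (Q v) = s (c * of_int i) v"
    and cnz: "c \<noteq> 0"
begin

sublocale aP: additive P by unfold_locales (rule Padd)
sublocale aQ: additive Q by unfold_locales (rule Qadd)
sublocale aA: additive A by unfold_locales (rule Aadd)
sublocale aK: additive K by unfold_locales (rule Kadd)

lemma Apow_add: "(A^^k) (x + y) = (A^^k) x + (A^^k) y"
  by (induct k) (auto simp: Aadd)
lemma Apow_scale: "(A^^k) (s a x) = s a ((A^^k) x)"
  by (induct k) (auto simp: Ascale)
lemma Apow_zero: "(A^^k) 0 = 0"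
  by (induct k) (auto simp: aA.zero)
lemma Apow_deg: "v \<in> Vg i j \<Longrightarrow> (A^^k) v \<in> Vg (i + int k) (j - int k)"
proof (induct k)
  case 0 thus ?case by simp
next
  case (Suc k)
  have "A ((A^^k) v) \<in> Vg (i + int k + 1) (j - int k - 1)" using Adeg Suc by blast
  moreover have "i + int (Suc k) = i + int k + 1" "j - int (Suc k) = j - int k - 1" by simp_all
  ultimately show ?case by (simp add: algebra_simps)
qed

lemma PA_pow: "P ((A^^k) v) = (A^^k) (P v)"
  by (induct k) (auto simp: AP[symmetric])

lemma QA1: "Q (A w) = A (Q w) - P w" using AQ[of w] by (simp add: algebra_simps)

lemma QA_pow: "Q ((A^^Suc k) v) = (A^^Suc k) (Q v) - s (of_nat (Suc k)) ((A^^k) (P v))"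
proof (induct k)
  case 0 thus ?case by (simp add: QA1)
next
  case (Suc k)
  have "Q ((A^^Suc (Suc k)) v) = A (Q ((A^^Suc k) v)) - P ((A^^Suc k) v)"
    by (simp add: QA1)
  also have "\<dots> = A ((A^^Suc k) (Q v)) - A (s (of_nat (Suc k)) ((A^^k) (P v))) - (A^^Suc k) (P v)"
    using Suc by (simp add: aA.diff PA_pow del: funpow.simps)
  also have "\<dots> = (A^^Suc (Suc k)) (Q v) - s (of_nat (Suc (Suc k))) ((A^^Suc k) (P v))"
    by (simp add: Ascale Aadd scale_left_distrib algebra_simps scale_two)
  finally show ?case .
qed

definition dT :: "'v \<Rightarrow> 'v" where "dT v = P v + Q v"

lemma dT_add: "dT (x + y) = dT x + dT y" unfolding dT_def by (simp add: Padd Qadd algebra_simps)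
lemma dT_scale: "dT (s a x) = s a (dT x)" unfolding dT_def by (simp add: Pscale Qscale scale_right_distrib)
sublocale adT: additive dT by unfold_locales (rule dT_add)
lemma dTT: "dT (dT v) = 0" unfolding dT_def
  using PQ[of v] by (simp add: Padd Qadd PP QQ algebra_simps)

definition TotS :: "int \<Rightarrow> 'v set" where "TotS n = supp_in (\<lambda>k. fst k + snd k = n)"
definition TT :: "int \<Rightarrow> int \<Rightarrow> 'v set" where "TT n m = supp_in (\<lambda>k. fst k + snd k = n \<and> m \<le> fst k)"

lemma sub_TotS: "subspace (TotS n)" unfolding TotS_def by (rule subspace_supp)
lemma sub_TT: "subspace (TT n m)" unfolding TT_def by (rule subspace_supp)
lemma TT_mono: "m' \<le> m \<Longrightarrow> TT n m \<subseteq> TT n m'" unfolding TT_def by (rule supp_mono) auto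
lemma TT_Tot: "TT n m \<subseteq> TotS n" unfolding TT_def TotS_def by (rule supp_mono) auto
lemma Tot_TT: "TotS n \<subseteq> TT n N" unfolding TT_def TotS_def supp_in_def
  using dec_nz_bnd by fastforce
lemma Vg_TT: "v \<in> Vg i j \<Longrightarrow> i + j = n \<Longrightarrow> m \<le> i \<Longrightarrow> v \<in> TT n m"
  unfolding TT_def by (rule single_supp) auto
lemma Vg_Tot: "v \<in> Vg i j \<Longrightarrow> i + j = n \<Longrightarrow> v \<in> TotS n"
  unfolding TotS_def by (rule single_supp) auto

lemma decP: "dec (P v) (i,j) = P (dec v (i-1, j))"
  using dec_op[OF Padd, of 1 0 v i j] Pdeg by simp
lemma decQ: "dec (Q v) (i,j) = Q (dec v (i, j-1))"
  using dec_op[OF Qadd, of 0 1 v i j] Qdeg by simp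
lemma decdT: "dec (dT v) (i,j) = P (dec v (i-1, j)) + Q (dec v (i, j-1))"
  unfolding dT_def by (simp add: dec_add decP decQ)

lemma dT_Tot: assumes "v \<in> TotS n" shows "dT v \<in> TotS (n+1)"
  unfolding TotS_def
proof (rule supp_inI)
  fix i j assume "dec (dT v) (i,j) \<noteq> 0"
  hence "dec v (i-1,j) \<noteq> 0 \<or> dec v (i,j-1) \<noteq> 0" unfolding decdT by (auto simp: aP.zero aQ.zero)
  thus "fst (i,j) + snd (i,j) = n + 1" using assms unfolding TotS_def supp_in_def by force
qed

lemma kill:
  assumes y: "y \<in> TT n m" and m: "m \<noteq> 0" and dy: "dT y \<in> TT (n+1) (m+1)"
  shows "\<exists>t \<in> TotS (n-1). y - dT t \<in> TT n (m+1)"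
proof -
  define ym where "ym = dec y (m, n-m)"
  have ym: "ym \<in> Vg m (n-m)" unfolding ym_def by (rule dec_in)
  have "dec y (m-1, n-m+1) = 0" using y unfolding TT_def supp_in_def by force
  hence "dec (dT y) (m, n-m+1) = Q ym" unfolding decdT ym_def by (simp add: aP.zero)
  moreover have "dec (dT y) (m, n-m+1) = 0" using dy unfolding TT_def supp_in_def by force
  ultimately have Qym: "Q ym = 0" by simp
  define r where "r = inverse (c * of_int m)"
  have cm: "c * of_int m \<noteq> 0" using cnz m by simp
  define t where "t = s r (K ym)"
  have Kym: "K ym \<in> Vg m (n-m-1)" using Kdeg[OF ym] .
  have t: "t \<in> TotS (n-1)" unfolding t_def
    by (rule subspace_scale[OF sub_TotS]) (rule Vg_Tot[OF Kym], simp)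
  have QKym: "Q (K ym) = s (c * of_int m) ym" using QK[OF ym] Qym aK.zero by simp
  have dt: "dT t = ym + s r (P (K ym))"
    unfolding t_def dT_def using cm by (simp add: Pscale Qscale QKym r_def add.commute del: mult_inverse_of_nat_commute) (simp add: field_simps)
  have PK: "s r (P (K ym)) \<in> Vg (m+1) (n-m-1)" by (rule subspace_scale[OF subVg Pdeg[OF Kym]])
  have "y - dT t \<in> TT n (m+1)"
    unfolding TT_def
  proof (rule supp_inI)
    fix i j assume nz: "dec (y - dT t) (i,j) \<noteq> 0"
    have e: "dec (y - dT t) (i,j) = dec y (i,j) - (if (i,j) = (m,n-m) then ym else 0)
        - (if (i,j) = (m+1,n-m-1) then s r (P (K ym)) else 0)"
      unfolding dt by (simp add: dec_diff dec_add dec_single[OF ym] dec_single[OF PK])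
    show "fst (i,j) + snd (i,j) = n \<and> m + 1 \<le> fst (i,j)"
    proof (cases "(i,j) = (m,n-m)")
      case True
      hence "dec (y - dT t) (i,j) = 0" unfolding e ym_def by auto
      thus ?thesis using nz by simp
    next
      case False
      show ?thesis
      proof (cases "(i,j) = (m+1,n-m-1)")
        case True thus ?thesis by simp
      next
        case F2: False
        have "dec y (i,j) \<noteq> 0" using nz False F2 unfolding e by auto
        hence "i + j = n \<and> m \<le> i" using y unfolding TT_def supp_in_def by force
        thus ?thesis using False by auto
      qed
    qed
  qed
  thus ?thesis using t by blast
qed

end


context qs begin

lemma dT_zero: "dT 0 = 0" by (rule adT.zero)

lemma raise1: "\<forall>y. y \<in> TT n (- int k) \<longrightarrow> dT y \<in> TT (n+1) 0 \<longrightarrow>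
   (\<exists>y' \<in> TT n 0. \<exists>t \<in> TotS (n-1). y = y' + dT t)"
proof (induct k)
  case 0
  show ?case using subspace_0[OF sub_TotS] dT_zero by force
next
  case (Suc k)
  show ?case
  proof (intro allI impI)
    fix y assume y: "y \<in> TT n (- int (Suc k))" and dy: "dT y \<in> TT (n+1) 0"
    have dy': "dT y \<in> TT (n+1) (- int (Suc k) + 1)" using dy TT_mono[of "- int (Suc k) + 1" 0] by auto
    obtain t1 where t1: "t1 \<in> TotS (n-1)" and y1: "y - dT t1 \<in> TT n (- int (Suc k) + 1)"
      using kill[OF y _ dy'] by auto
    have y1': "y - dT t1 \<in> TT n (- int k)" using y1 by simp
    have "dT (y - dT t1) = dT y" by (simp add: adT.diff dTT)
    then obtain y' t2 where y': "y' \<in> TT n 0" and t2: "t2 \<in> TotS (n-1)" and e: "y - dT t1 = y' + dT t2"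
      using Suc y1' dy by metis
    have "y = y' + dT (t2 + t1)" using e by (simp add: dT_add algebra_simps)
    moreover have "t2 + t1 \<in> TotS (n-1)" by (rule subspace_add[OF sub_TotS t2 t1])
    ultimately show "\<exists>y' \<in> TT n 0. \<exists>t \<in> TotS (n-1). y = y' + dT t" using y' by blast
  qed
qed

lemma raise1': assumes "y \<in> TotS n" "dT y \<in> TT (n+1) 0"
  shows "\<exists>y' \<in> TT n 0. \<exists>t \<in> TotS (n-1). y = y' + dT t"
proof -
  have "- int (nat (- N)) \<le> N" by simp
  hence "y \<in> TT n (- int (nat (- N)))" using assms(1) Tot_TT TT_mono by blast
  thus ?thesis using raise1 assms(2) by blast
qed

lemma raise2: "\<forall>y m. 1 \<le> m \<longrightarrow> n - N < m + int k \<longrightarrow> y \<in> TT n m \<longrightarrow> dT y = 0 \<longrightarrow>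
   (\<exists>t \<in> TotS (n-1). y = dT t)"
proof (induct k)
  case 0
  show ?case
  proof (intro allI impI)
    fix y m assume m: "n - N < m + int 0" and y: "y \<in> TT n m"
    have "dec y k = 0" for k
    proof (rule ccontr)
      assume nz: "dec y k \<noteq> 0"
      obtain i j where k: "k = (i,j)" by force
      have "i + j = n \<and> m \<le> i" using y nz k unfolding TT_def supp_in_def by force
      moreover have "N \<le> j" using dec_nz_bnd nz k by blast
      ultimately show False using m by simp
    qed
    hence "y = 0" by (rule dec_zeroD)
    thus "\<exists>t \<in> TotS (n-1). y = dT t" using subspace_0[OF sub_TotS] dT_zero by force
  qed
next
  case (Suc k)
  show ?case
  proof (intro allI impI)
    fix y m assume m1: "1 \<le> m" and m: "n - N < m + int (Suc k)" and y: "y \<in> TT n m" and dy: "dT y = 0"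
    have "dT y \<in> TT (n+1) (m+1)" using dy subspace_0[OF sub_TT] by simp
    then obtain t1 where t1: "t1 \<in> TotS (n-1)" and y1: "y - dT t1 \<in> TT n (m + 1)"
      using kill[OF y] m1 by force
    have "dT (y - dT t1) = 0" by (simp add: adT.diff dTT dy)
    then obtain t2 where t2: "t2 \<in> TotS (n-1)" and e: "y - dT t1 = dT t2"
      using Suc[rule_format, of "m+1" "y - dT t1"] m1 m y1 by auto
    have "y = dT (t2 + t1)" using e by (simp add: dT_add algebra_simps)
    moreover have "t2 + t1 \<in> TotS (n-1)" by (rule subspace_add[OF sub_TotS t2 t1])
    ultimately show "\<exists>t \<in> TotS (n-1). y = dT t" by blast
  qed
qed

definition cf :: "nat \<Rightarrow> 'k" where "cf k = inverse (of_nat (fact k))"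
definition fM :: "nat \<Rightarrow> 'v \<Rightarrow> 'v" where "fM M v = (\<Sum>k<M. s (cf k) ((A^^k) v))"
definition ff :: "'v \<Rightarrow> 'v" where "ff v = fM (LEAST m. (A^^m) v = 0) v"

lemma nilA: "\<exists>M. \<forall>v \<in> TotS n. \<forall>k \<ge> M. (A^^k) v = 0"
proof (intro exI ballI allI impI)
  fix v k assume v: "v \<in> TotS n" and k: "nat (n - 2 * N + 1) \<le> k"
  have "dec ((A^^k) v) (i,j) = 0" for i j
  proof -
    have "dec ((A^^k) v) (i,j) = (A^^k) (dec v (i - int k, j - (- int k)))"
      by (rule dec_op[OF Apow_add]) (use Apow_deg in simp)
    also have "\<dots> = 0"
    proof (cases "dec v (i - int k, j - (- int k)) = 0")
      case True thus ?thesis by (simp add: Apow_zero)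
    next
      case False
      have "i - int k + (j - (- int k)) = n" using supp_inD[OF v[unfolded TotS_def] False] by simp
      moreover have "N \<le> i - int k" using dec_nz_bnd[OF False] by simp
      ultimately have "j < N" using k by linarith
      hence "Vg i j = {0}" using bnd by blast
      moreover have "(A^^k) (dec v (i - int k, j - (- int k))) \<in> Vg (i - int k + int k) (j - (- int k) - int k)"
        by (rule Apow_deg[OF dec_in])
      ultimately show ?thesis by simp
    qed
    finally show ?thesis .
  qed
  thus "(A^^k) v = 0" using dec_zeroD by auto
qed

lemma Apow_kill: "(A^^m) v = 0 \<Longrightarrow> m \<le> k \<Longrightarrow> (A^^k) v = 0"
proof -
  assume "(A^^m) v = 0" "m \<le> k"
  then obtain e where e: "k = e + m" by (metis le_add_diff_inverse2)
  hence "(A^^k) v = (A^^e) ((A^^m) v)" by (simp add: funpow_add)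
  thus ?thesis using \<open>(A^^m) v = 0\<close> Apow_zero by simp
qed

lemma ff_eq: assumes "(A^^m) v = 0" "m \<le> M" shows "ff v = fM M v"
proof -
  define L where "L = (LEAST m. (A^^m) v = 0)"
  have L: "L \<le> m" unfolding L_def using assms(1) by (rule Least_le)
  have "fM M v = fM L v" unfolding fM_def
  proof (rule sum.mono_neutral_right)
    show "{..<L} \<subseteq> {..<M}" using L assms by auto
    have "(A^^L) v = 0" unfolding L_def by (rule LeastI[of _ m]) (rule assms(1))
    thus "\<forall>k\<in>{..<M} - {..<L}. s (cf k) ((A ^^ k) v) = 0" using Apow_kill by auto
  qed auto
  thus ?thesis unfolding ff_def L_def by simp
qed

lemma fM_add: "fM M (x + y) = fM M x + fM M y"
  unfolding fM_def by (simp add: Apow_add scale_right_distrib sum.distrib)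
lemma fM_scale: "fM M (s a x) = s a (fM M x)"
  unfolding fM_def by (simp add: Apow_scale scale_sum_right mult.commute)

lemma cf0: "cf 0 = 1" unfolding cf_def by simp
lemma cfSuc: "cf (Suc k) * of_nat (Suc k) = cf k"
proof -
  have "(of_nat (fact k)::'k) \<noteq> 0" by simp
  moreover have "(of_nat (Suc k)::'k) \<noteq> 0" by (simp del: of_nat_Suc)
  ultimately show ?thesis unfolding cf_def fact_Suc of_nat_mult by (simp del: of_nat_Suc)
qed

lemma tele: "dT (fM (Suc M) v) = fM (Suc M) (Q v) + s (cf M) ((A^^M) (P v))"
proof (induct M)
  case 0 thus ?case by (simp add: fM_def cf0 dT_def add.commute)
next
  case (Suc M)
  have "fM (Suc (Suc M)) v = fM (Suc M) v + s (cf (Suc M)) ((A^^Suc M) v)"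
    unfolding fM_def by simp
  hence "dT (fM (Suc (Suc M)) v) = dT (fM (Suc M) v) + s (cf (Suc M)) (P ((A^^Suc M) v) + Q ((A^^Suc M) v))"
    by (simp only: dT_add dT_scale) (simp add: dT_def)
  also have "\<dots> = fM (Suc M) (Q v) + s (cf M) ((A^^M) (P v))
      + s (cf (Suc M)) ((A^^Suc M) (P v)) + s (cf (Suc M)) ((A^^Suc M) (Q v))
      - s (cf (Suc M) * of_nat (Suc M)) ((A^^M) (P v))"
    unfolding Suc PA_pow QA_pow
    by (simp add: scale_right_distrib scale_right_diff_distrib algebra_simps del: funpow.simps of_nat_Suc)
  also have "\<dots> = fM (Suc (Suc M)) (Q v) + s (cf (Suc M)) ((A^^Suc M) (P v))"
    unfolding cfSuc fM_def by (simp del: funpow.simps)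
  finally show ?case .
qed

end


context qs begin

lemma ff_fM: assumes "v \<in> TotS n" obtains M where "\<And>M'. M \<le> M' \<Longrightarrow> ff v = fM M' v"
proof -
  obtain M where M: "\<forall>v \<in> TotS n. \<forall>k \<ge> M. (A^^k) v = 0" using nilA by blast
  show ?thesis by (rule that[of M]) (rule ff_eq, use M assms in auto)
qed

lemma fM_z: "z \<in> Vg 0 n \<Longrightarrow> fM (Suc M) z - z \<in> TT n 1"
proof (induct M)
  case 0 thus ?case by (simp add: fM_def cf0 subspace_0[OF sub_TT])
next
  case (Suc M)
  have "fM (Suc (Suc M)) z - z = (fM (Suc M) z - z) + s (cf (Suc M)) ((A^^Suc M) z)"
    unfolding fM_def by (simp del: funpow.simps)
  moreover have "(A^^Suc M) z \<in> TT n 1"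
    by (rule Vg_TT[OF Apow_deg[OF Suc.prems]]) auto
  ultimately show ?case using Suc subspace_add[OF sub_TT] subspace_scale[OF sub_TT] by metis
qed

lemma ffz: assumes z: "z \<in> Vg 0 n" shows "ff z - z \<in> TT n 1"
proof -
  obtain M where "\<And>M'. M \<le> M' \<Longrightarrow> ff z = fM M' z" using ff_fM[OF Vg_Tot[OF z]] by auto
  hence "ff z = fM (Suc M) z" by simp
  thus ?thesis using fM_z[OF z] by simp
qed

lemma ffz_TT: assumes z: "z \<in> Vg 0 n" shows "ff z \<in> TT n 0"
proof -
  have "ff z = (ff z - z) + z" by simp
  moreover have "ff z - z \<in> TT n 0" using ffz[OF z] TT_mono[of 0 1 n] by auto
  moreover have "z \<in> TT n 0" by (rule Vg_TT[OF z]) auto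
  ultimately show ?thesis using subspace_add[OF sub_TT] by metis
qed

lemma ffz_dec: assumes z: "z \<in> Vg 0 n" shows "dec (ff z) (0,n) = z"
proof -
  have "dec (ff z - z) (0,n) = 0" using supp_inD[OF ffz[OF z, unfolded TT_def]] by force
  thus ?thesis by (simp add: dec_diff dec_single[OF z])
qed

lemma ff_chain: assumes z: "z \<in> Vg 0 n" shows "ff (Q z) = dT (ff z)"
proof -
  have Qz: "Q z \<in> Vg 0 (n+1)" using Qdeg[OF z] .
  obtain M1 where M1: "\<And>M'. M1 \<le> M' \<Longrightarrow> ff z = fM M' z" using ff_fM[OF Vg_Tot[OF z]] by auto
  obtain M2 where M2: "\<And>M'. M2 \<le> M' \<Longrightarrow> ff (Q z) = fM M' (Q z)" using ff_fM[OF Vg_Tot[OF Qz]] by auto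
  obtain M0 where M0: "\<forall>v \<in> TotS n. \<forall>k \<ge> M0. (A^^k) v = 0" using nilA by blast
  define M where "M = max M0 (max M1 M2)"
  have "(A^^M) z = 0" using M0 Vg_Tot[OF z] unfolding M_def by auto
  hence "(A^^M) (P z) = 0" by (simp add: PA_pow[symmetric] aP.zero)
  thus ?thesis using tele[of M z] M1[of "Suc M"] M2[of "Suc M"] unfolding M_def by simp
qed

lemma ff_zero: "ff 0 = 0"
  using ff_eq[of 0 0 0] by (simp add: fM_def)

lemma ff_lin: assumes "x \<in> Vg 0 n" "y \<in> Vg 0 n"
  shows "ff (x + y) = ff x + ff y" "ff (s a x) = s a (ff x)"
proof -
  have xy: "x + y \<in> Vg 0 n" "s a x \<in> Vg 0 n" using subspace_add[OF subVg assms] subspace_scale[OF subVg assms(1)] by auto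
  obtain M1 where M1: "\<And>M'. M1 \<le> M' \<Longrightarrow> ff x = fM M' x" using ff_fM[OF Vg_Tot[OF assms(1)]] by auto
  obtain M2 where M2: "\<And>M'. M2 \<le> M' \<Longrightarrow> ff y = fM M' y" using ff_fM[OF Vg_Tot[OF assms(2)]] by auto
  obtain M3 where M3: "\<And>M'. M3 \<le> M' \<Longrightarrow> ff (x+y) = fM M' (x+y)" using ff_fM[OF Vg_Tot[OF xy(1)]] by auto
  obtain M4 where M4: "\<And>M'. M4 \<le> M' \<Longrightarrow> ff (s a x) = fM M' (s a x)" using ff_fM[OF Vg_Tot[OF xy(2)]] by auto
  define M where "M = max (max M1 M2) (max M3 M4)"
  show "ff (x + y) = ff x + ff y" using M1[of M] M2[of M] M3[of M] fM_add unfolding M_def by simp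
  show "ff (s a x) = s a (ff x)" using M1[of M] M4[of M] fM_scale unfolding M_def by simp
qed

lemma Tot_eq: "Tot s Vg = TotS"
  unfolding Tot_def TotS_def by (rule ext) (rule span_eq)

lemma main: "quasi_iso s (col0 Vg) Q (Tot s Vg) dT ff"
  unfolding quasi_iso_def Tot_eq col0_def
proof (intro conjI allI impI ballI)
  show "cochain_complex s (\<lambda>n. Vg 0 n) Q"
    unfolding cochain_complex_def lin_on_def
    using subVg Qadd Qscale Qdeg QQ by auto
  show "cochain_complex s TotS dT"
    unfolding cochain_complex_def lin_on_def
    using sub_TotS dT_add dT_scale dT_Tot dTT by auto
  fix n
  show "lin_on s (Vg 0 n) ff" unfolding lin_on_def using ff_lin by blast
  show "ff ` Vg 0 n \<subseteq> TotS n" using ffz_TT TT_Tot by blast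
  show "\<And>x. x \<in> Vg 0 n \<Longrightarrow> ff (Q x) = dT (ff x)" by (rule ff_chain)
next
  fix n z
  assume h: "z \<in> Vg 0 n \<and> Q z = 0 \<and> (\<exists>y\<in>TotS (n - 1). ff z = dT y)"
  then obtain y where z: "z \<in> Vg 0 n" and y: "y \<in> TotS (n-1)" and e: "ff z = dT y" by blast
  have "dT y \<in> TT (n - 1 + 1) 0" using ffz_TT[OF z] e by simp
  then obtain y' t where y': "y' \<in> TT (n-1) 0" and t: "t \<in> TotS (n-1-1)" and yy: "y = y' + dT t"
    using raise1'[OF y] by blast
  have "dT y = dT y'" using yy by (simp add: dT_add dTT)
  have "dec y' (-1, n) = 0" using y' unfolding TT_def supp_in_def by force
  hence "dec (dT y') (0, n) = Q (dec y' (0, n-1))" by (simp add: decdT aP.zero)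
  hence "z = Q (dec y' (0, n-1))" using ffz_dec[OF z] e \<open>dT y = dT y'\<close> by simp
  thus "\<exists>y\<in>Vg 0 (n - 1). z = Q y" using dec_in by blast
next
  fix n w
  assume h: "w \<in> TotS n \<and> dT w = 0"
  hence w: "w \<in> TotS n" and dw: "dT w = 0" by auto
  have "dT w \<in> TT (n+1) 0" using dw subspace_0[OF sub_TT] by simp
  then obtain w' t where w': "w' \<in> TT n 0" and t: "t \<in> TotS (n-1)" and ww: "w = w' + dT t"
    using raise1'[OF w] by blast
  have dw': "dT w' = 0" using dw ww by (simp add: dT_add dTT)
  define z where "z = dec w' (0,n)"
  have z: "z \<in> Vg 0 n" unfolding z_def by (rule dec_in)
  have "dec w' (-1, n+1) = 0" using w' unfolding TT_def supp_in_def by force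
  hence "dec (dT w') (0, n+1) = Q z" unfolding z_def by (simp add: decdT aP.zero)
  hence Qz: "Q z = 0" using dw' by (simp add: dec_zero)
  have w'z: "w' - z \<in> TT n 1"
    unfolding TT_def
  proof (rule supp_inI)
    fix i j assume nz: "dec (w' - z) (i,j) \<noteq> 0"
    show "fst (i,j) + snd (i,j) = n \<and> 1 \<le> fst (i,j)"
    proof (cases "(i,j) = (0,n)")
      case True
      have "dec (w' - z) (0,n) = 0" by (simp add: dec_diff dec_single[OF z]) (simp add: z_def)
      thus ?thesis using nz True by simp
    next
      case False
      hence "dec w' (i,j) \<noteq> 0" using nz by (auto simp: dec_diff dec_single[OF z])
      hence "i + j = n \<and> 0 \<le> i" using w' unfolding TT_def supp_in_def by force
      thus ?thesis using False by auto
    qed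
  qed
  have w'': "w' - ff z \<in> TT n 1"
  proof -
    have "w' - ff z = (w' - z) - (ff z - z)" by simp
    thus ?thesis using subspace_diff[OF sub_TT w'z ffz[OF z]] by simp
  qed
  have "dT (w' - ff z) = 0" using dw' ff_chain[OF z, symmetric] Qz ff_zero by (simp add: adT.diff)
  then obtain t2 where t2: "t2 \<in> TotS (n-1)" and e2: "w' - ff z = dT t2"
  proof -
    have "n - N < 1 + int (nat (n - N))" by simp
    thus ?thesis using raise2[rule_format, of 1 n "nat (n - N)" "w' - ff z"] w'' \<open>dT (w' - ff z) = 0\<close> that by blast
  qed
  have "w = ff z + dT (t2 + t)" using ww e2 by (simp add: dT_add algebra_simps)
  moreover have "t2 + t \<in> TotS (n-1)" by (rule subspace_add[OF sub_TotS t2 t])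
  ultimately show "\<exists>z\<in>Vg 0 n. Q z = 0 \<and> (\<exists>y\<in>TotS (n - 1). w = ff z + dT y)"
    using z Qz by blast
qed

end


definition Zd :: "'k::field grass \<Rightarrow> 'k grass" where "Zd h = (\<lambda>m. 0)"

lemma sder_Z: "sder p Zd"
  unfolding sder_def by (simp add: Zd_def gdefs fe4 ghomog_iff)

lemma Der_odd: "sder True x \<Longrightarrow> x \<in> Der"
  unfolding Der_def by (rule CollectI, rule exI[of _ Zd], rule exI[of _ x]) (simp add: sder_Z gadd_def Zd_def)
lemma Der_even: "sder False x \<Longrightarrow> x \<in> Der"
  unfolding Der_def by (rule CollectI, rule exI[of _ x], rule exI[of _ Zd]) (simp add: sder_Z gadd_def Zd_def)

lemma decex_swap:
  fixes Vg :: "int \<Rightarrow> int \<Rightarrow> 'a::comm_monoid_add set"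
  assumes "\<And>v. \<exists>!cc. finite {ij. cc ij \<noteq> 0} \<and> (\<forall>i j. cc (i,j) \<in> Vg i j) \<and> v = sum cc {ij. cc ij \<noteq> 0}"
  shows "\<exists>!cc. finite {ij. cc ij \<noteq> 0} \<and> (\<forall>i j. cc (i,j) \<in> Vg j i) \<and> v = sum cc {ij. cc ij \<noteq> 0}"
proof -
  define \<Phi> where "\<Phi> W cc \<longleftrightarrow> finite {ij. cc ij \<noteq> 0} \<and> (\<forall>i j. cc (i,j) \<in> W i j) \<and> v = sum cc {ij. cc ij \<noteq> (0::'a)}"
    for W :: "int \<Rightarrow> int \<Rightarrow> 'a set" and cc
  have key: "\<Phi> (\<lambda>i j. Vg j i) cc \<longleftrightarrow> \<Phi> Vg (cc \<circ> prod.swap)" for cc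
  proof -
    have S: "{ij. (cc \<circ> prod.swap) ij \<noteq> 0} = prod.swap ` {ij. cc ij \<noteq> 0}"
      by (auto simp: image_iff)
    have fin: "finite {ij. (cc \<circ> prod.swap) ij \<noteq> 0} \<longleftrightarrow> finite {ij. cc ij \<noteq> 0}"
      unfolding S by (rule finite_image_iff) simp
    have sm: "sum (cc \<circ> prod.swap) {ij. (cc \<circ> prod.swap) ij \<noteq> 0} = sum cc {ij. cc ij \<noteq> 0}"
      unfolding S by (subst sum.reindex) (auto simp: comp_def)
    have mem: "(\<forall>i j. cc (i,j) \<in> Vg j i) \<longleftrightarrow> (\<forall>i j. (cc \<circ> prod.swap) (i,j) \<in> Vg i j)"
      by auto
    show ?thesis unfolding \<Phi>_def fin sm mem ..
  qed
  have "\<exists>!c. \<Phi> Vg c" unfolding \<Phi>_def by (rule assms)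
  then obtain c0 where c0: "\<Phi> Vg c0" and u: "\<And>c. \<Phi> Vg c \<Longrightarrow> c = c0" by auto
  have "\<Phi> (\<lambda>i j. Vg j i) (c0 \<circ> prod.swap)" unfolding key by (simp add: comp_def c0)
  moreover have "cc = c0 \<circ> prod.swap" if "\<Phi> (\<lambda>i j. Vg j i) cc" for cc
  proof -
    have "cc \<circ> prod.swap = c0" using that key u by blast
    thus ?thesis by (auto simp: fun_eq_iff)
  qed
  ultimately have "\<exists>!cc. \<Phi> (\<lambda>i j. Vg j i) cc" by (intro ex1I) auto
  thus ?thesis unfolding \<Phi>_def .
qed

locale n2 =
  fixes s :: "'k::field_char_0 \<Rightarrow> 'v::ab_group_add \<Rightarrow> 'v" and Vpar Vg
    and \<rho> :: "('k grass \<Rightarrow> 'k grass) \<Rightarrow> 'v \<Rightarrow> 'v" and N :: int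
  assumes N2: "N2_susy_complex s Vpar Vg \<rho>" and bndN: "\<And>i j. i < N \<or> j < N \<Longrightarrow> Vg i j = {0}"
begin

lemma N2c1: "vector_space s"
  using N2 unfolding N2_susy_complex_def by (elim conjE) assumption
lemma N2c2: "\<forall>i j. module.subspace s (Vg i j)"
  using N2 unfolding N2_susy_complex_def by (elim conjE) assumption
lemma N2c3: "\<forall>v. \<exists>!c :: int \<times> int \<Rightarrow> 'v. finite {ij. c ij \<noteq> 0} \<and> (\<forall>i j. c (i, j) \<in> Vg i j) \<and> v = sum c {ij. c ij \<noteq> 0}"
  using N2 unfolding N2_susy_complex_def by (elim conjE) assumption
lemma N2c4: "\<forall>D\<in>Der. \<forall>c. \<rho> (\<lambda>h. gscale c (D h)) = (\<lambda>v. s c (\<rho> D v))"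
  using N2 unfolding N2_susy_complex_def by (elim conjE) assumption
lemma N2c5: "\<forall>p D. sder p D \<longrightarrow> lin_on s UNIV (\<rho> D) \<and> (\<forall>q v. v \<in> Vpar q \<longrightarrow> \<rho> D v \<in> Vpar (q \<noteq> p))"
  using N2 unfolding N2_susy_complex_def by (elim conjE) assumption
lemma N2c6: "\<forall>p q D E. sder p D \<longrightarrow> sder q E \<longrightarrow>
        \<rho> (\<lambda>h. gadd (D (E h)) (gscale (- ssign p q) (E (D h))))
          = (\<lambda>v. - (\<rho> D (\<rho> E v) - s (ssign p q) (\<rho> E (\<rho> D v))))"
  using N2 unfolding N2_susy_complex_def by (elim conjE) assumption
lemma N2c7: "\<forall>i j v. v \<in> Vg i j \<longrightarrow> \<rho> E11 v = s (of_int i) v \<and> \<rho> E22 v = s (of_int j) v"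
  using N2 unfolding N2_susy_complex_def by (elim conjE) assumption
lemmas N2c = N2c1 N2c2 N2c3 N2c4 N2c5 N2c6 N2c7


lemma vs: "vector_space s" by (rule N2c(1))

lemma n2_qs0: "qs0 s Vg N"
proof (rule qs0.intro[OF vs], rule qs0_axioms.intro)
  show "module.subspace s (Vg i j)" for i j using N2c(2) by blast
  show "\<exists>!cc. finite {ij. cc ij \<noteq> 0} \<and> (\<forall>i j. cc (i,j) \<in> Vg i j) \<and> v = sum cc {ij. cc ij \<noteq> 0}" for v
    using N2c(3) by blast
  show "i < N \<or> j < N \<Longrightarrow> Vg i j = {0}" for i j by (rule bndN)
qed

sublocale qs0 s Vg N by (rule n2_qs0)

lemma lin: "sder p D \<Longrightarrow> \<rho> D (x + y) = \<rho> D x + \<rho> D y" "sder p D \<Longrightarrow> \<rho> D (s a x) = s a (\<rho> D x)"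
proof -
  assume "sder p D"
  hence "lin_on s UNIV (\<rho> D)" using N2c(5) by blast
  thus "\<rho> D (x + y) = \<rho> D x + \<rho> D y" "\<rho> D (s a x) = s a (\<rho> D x)" unfolding lin_on_def by blast+
qed

lemma rho_scale: "X \<in> Der \<Longrightarrow> \<rho> (\<lambda>h. gscale a (X h)) v = s a (\<rho> X v)"
  using N2c(4) by simp

lemma rho_br: "sder p D \<Longrightarrow> sder q E \<Longrightarrow> \<rho> (Br p q D E) v = - (\<rho> D (\<rho> E v) - s (ssign p q) (\<rho> E (\<rho> D v)))"
  unfolding Br_def using N2c(6) by simp

lemma Eact: "v \<in> Vg i j \<Longrightarrow> \<rho> E11 v = s (of_int i) v" "v \<in> Vg i j \<Longrightarrow> \<rho> E22 v = s (of_int j) v"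
  using N2c(7) by blast+

lemma br_rel: "sder p D \<Longrightarrow> sder q E \<Longrightarrow> Br p q D E = (\<lambda>h. gscale a (X h)) \<Longrightarrow> X \<in> Der \<Longrightarrow>
   s a (\<rho> X v) = - (\<rho> D (\<rho> E v) - s (ssign p q) (\<rho> E (\<rho> D v)))"
  using rho_br rho_scale by metis

lemma degree:
  assumes x: "sder q x" and b1: "Br False q E11 x = (\<lambda>h. gscale (of_int \<alpha>) (x h))"
    and b2: "Br False q E22 x = (\<lambda>h. gscale (of_int \<beta>) (x h))" and v: "v \<in> Vg i j"
  shows "\<rho> x v \<in> Vg (i - \<alpha>) (j - \<beta>)"
proof (rule eigen)
  show "\<rho> E11 (a + b) = \<rho> E11 a + \<rho> E11 b" for a b by (rule lin[OF sder_E11])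
  show "\<rho> E22 (a + b) = \<rho> E22 a + \<rho> E22 b" for a b by (rule lin[OF sder_E22])
  show "\<And>i j v. v \<in> Vg i j \<Longrightarrow> \<rho> E11 v = s (of_int i) v" by (rule Eact)
  show "\<And>i j v. v \<in> Vg i j \<Longrightarrow> \<rho> E22 v = s (of_int j) v" by (rule Eact)
  have xD: "x \<in> Der" using x Der_odd Der_even by (cases q) auto
  have s1: "ssign False q = (1::'k)" by (simp add: ssign_def)
  have "s (of_int \<alpha>) (\<rho> x v) = - (\<rho> E11 (\<rho> x v) - \<rho> x (\<rho> E11 v))"
    using br_rel[OF sder_E11 x b1 xD, of v] s1 by simp
  hence "\<rho> E11 (\<rho> x v) = s (of_int i) (\<rho> x v) - s (of_int \<alpha>) (\<rho> x v)"
    using Eact(1)[OF v] lin(2)[OF x] by (simp add: algebra_simps)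
  thus "\<rho> E11 (\<rho> x v) = s (of_int (i - \<alpha>)) (\<rho> x v)" by (simp add: scale_left_diff_distrib)
  have "s (of_int \<beta>) (\<rho> x v) = - (\<rho> E22 (\<rho> x v) - \<rho> x (\<rho> E22 v))"
    using br_rel[OF sder_E22 x b2 xD, of v] s1 by simp
  hence "\<rho> E22 (\<rho> x v) = s (of_int j) (\<rho> x v) - s (of_int \<beta>) (\<rho> x v)"
    using Eact(2)[OF v] lin(2)[OF x] by (simp add: algebra_simps)
  thus "\<rho> E22 (\<rho> x v) = s (of_int (j - \<beta>)) (\<rho> x v)" by (simp add: scale_left_diff_distrib)
qed

lemma twice0: assumes "(x::'v) + x = 0" shows "x = 0"
proof -
  have "s 2 x = 0" using assms by (simp only: scale_two)
  thus ?thesis by (rule scale_cancel[rotated]) simp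
qed

lemma sq0: assumes "sder True D" "Br True True D D = (\<lambda>h. gscale 0 (X h))" "X \<in> Der" shows "\<rho> D (\<rho> D v) = 0"
proof -
  define y where "y = \<rho> D (\<rho> D v)"
  have "s 0 (\<rho> X v) = - (y - s (ssign True True) y)"
    unfolding y_def by (rule br_rel[OF assms(1) assms(1) assms(2,3)])
  hence "- y = y" by (simp add: ssign_def)
  hence "y + y = 0" by (subst (asm) neg_eq_iff_add_eq_0)
  thus ?thesis unfolding y_def by (rule twice0)
qed

lemma anti0: assumes "sder True D" "sder True E" "Br True True D E = (\<lambda>h. gscale 0 (X h))" "X \<in> Der"
  shows "\<rho> D (\<rho> E v) + \<rho> E (\<rho> D v) = 0"
proof -
  have "s 0 (\<rho> X v) = - (\<rho> D (\<rho> E v) - s (ssign True True) (\<rho> E (\<rho> D v)))"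
    by (rule br_rel[OF assms])
  hence "0 = - (\<rho> D (\<rho> E v) + \<rho> E (\<rho> D v))" by (simp add: ssign_def)
  thus ?thesis by (simp only: neg_0_equal_iff_equal)
qed

lemma negeq: assumes "- (a::'v) = - b - c" shows "b + c = a"
proof -
  have "a = - (- a)" by simp
  also have "\<dots> = - (- b - c)" by (simp only: assms)
  also have "\<dots> = b + c" by simp
  finally show ?thesis by simp
qed

lemma comm: assumes "sder False D" "sder True E" "Br False True D E = (\<lambda>h. gscale a (X h))" "X \<in> Der"
  shows "\<rho> D (\<rho> E v) - \<rho> E (\<rho> D v) = - s a (\<rho> X v)"
  using br_rel[OF assms, of v] by (simp add: ssign_def)

lemma colres: "\<exists>f. quasi_iso s (col0 Vg) (\<rho> del2) (Tot s Vg) (\<lambda>v. \<rho> del1 v + \<rho> del2 v) f"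
proof -
  interpret C: qs s Vg N "\<rho> del1" "\<rho> del2" "\<rho> a1" "\<rho> k1" 1
  proof (intro qs.intro qs_axioms.intro n2_qs0)
    show "\<rho> del1 (x + y) = \<rho> del1 x + \<rho> del1 y" "\<rho> del1 (s a x) = s a (\<rho> del1 x)" for x y a
      by (rule lin[OF sder_del1])+
    show "\<rho> del2 (x + y) = \<rho> del2 x + \<rho> del2 y" "\<rho> del2 (s a x) = s a (\<rho> del2 x)" for x y a
      by (rule lin[OF sder_del2])+
    show "\<rho> a1 (x + y) = \<rho> a1 x + \<rho> a1 y" "\<rho> a1 (s a x) = s a (\<rho> a1 x)" for x y a
      by (rule lin[OF sder_a1])+
    show "\<rho> k1 (x + y) = \<rho> k1 x + \<rho> k1 y" "\<rho> k1 (s a x) = s a (\<rho> k1 x)" for x y a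
      by (rule lin[OF sder_k1])+
    show "v \<in> Vg i j \<Longrightarrow> \<rho> del1 v \<in> Vg (i+1) j" for v i j
      using degree[OF sder_del1 e11d1 e22d1] by simp
    show "v \<in> Vg i j \<Longrightarrow> \<rho> del2 v \<in> Vg i (j+1)" for v i j
      using degree[OF sder_del2 e11d2 e22d2] by simp
    show "v \<in> Vg i j \<Longrightarrow> \<rho> a1 v \<in> Vg (i+1) (j-1)" for v i j
      using degree[OF sder_a1 e11a1 e22a1] by simp
    show "v \<in> Vg i j \<Longrightarrow> \<rho> k1 v \<in> Vg i (j-1)" for v i j
      using degree[OF sder_k1 e11k1 e22k1] by simp
    show "\<rho> del1 (\<rho> del1 v) = 0" for v by (rule sq0[OF sder_del1 B1 Der_odd[OF sder_del1]])
    show "\<rho> del2 (\<rho> del2 v) = 0" for v by (rule sq0[OF sder_del2 B2 Der_odd[OF sder_del2]])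
    show "\<rho> del1 (\<rho> del2 v) + \<rho> del2 (\<rho> del1 v) = 0" for v
      by (rule anti0[OF sder_del1 sder_del2 B3 Der_odd[OF sder_del1]])
    show "\<rho> a1 (\<rho> del2 v) - \<rho> del2 (\<rho> a1 v) = \<rho> del1 v" for v
      using comm[OF sder_a1 sder_del2 B4 Der_odd[OF sder_del1]] by simp
    show "\<rho> a1 (\<rho> del1 v) = \<rho> del1 (\<rho> a1 v)" for v
      using comm[OF sder_a1 sder_del1 B5 Der_odd[OF sder_del1]] by simp
    show "v \<in> Vg i j \<Longrightarrow> \<rho> del2 (\<rho> k1 v) + \<rho> k1 (\<rho> del2 v) = s (1 * of_int i) v" for v i j
      using br_rel[OF sder_del2 sder_k1 B6 Der_even[OF sder_E11], of v] Eact(1)[of v i j]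
      by (simp add: ssign_def) (rule negeq, simp)
    show "(1::'k) \<noteq> 0" by simp
  qed
  have e: "C.dT = (\<lambda>v. \<rho> del1 v + \<rho> del2 v)" by (simp add: C.dT_def fun_eq_iff)
  show ?thesis using C.main unfolding e by blast
qed

lemma Tot_swap: "Tot s (\<lambda>i j. Vg j i) = Tot s Vg"
proof (rule ext)
  fix n
  have "{Vg j i | i j. i + j = n} = {Vg i j | i j. i + j = n}"
  proof (intro set_eqI iffI)
    fix X assume "X \<in> {Vg j i | i j. i + j = n}"
    then obtain i j where X: "X = Vg j i" "i + j = n" by blast
    hence "j + i = n" by simp
    thus "X \<in> {Vg i j | i j. i + j = n}" using X by blast
  next
    fix X assume "X \<in> {Vg i j | i j. i + j = n}"
    then obtain i j where X: "X = Vg i j" "i + j = n" by blast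
    hence "j + i = n" by simp
    thus "X \<in> {Vg j i | i j. i + j = n}" using X by blast
  qed
  thus "Tot s (\<lambda>i j. Vg j i) n = Tot s Vg n" unfolding Tot_def by simp
qed

lemma col_swap: "col0 (\<lambda>i j. Vg j i) = row0 Vg"
  by (simp add: fun_eq_iff col0_def row0_def)

lemma rowres: "\<exists>f. quasi_iso s (row0 Vg) (\<rho> del1) (Tot s Vg) (\<lambda>v. \<rho> del1 v + \<rho> del2 v) f"
proof -
  interpret R: qs s "\<lambda>i j. Vg j i" N "\<rho> del2" "\<rho> del1" "\<rho> a2" "\<rho> k2" "-1"
  proof (intro qs.intro qs_axioms.intro qs0.intro[OF vs] qs0_axioms.intro)
    show "subspace (Vg j i)" for i j by (rule subVg)
    show "\<exists>!cc. finite {ij. cc ij \<noteq> 0} \<and> (\<forall>i j. cc (i,j) \<in> Vg j i) \<and> v = sum cc {ij. cc ij \<noteq> 0}" for v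
      by (rule decex_swap) (rule decex)
    show "i < N \<or> j < N \<Longrightarrow> Vg j i = {0}" for i j using bndN by blast
    show "\<rho> del1 (x + y) = \<rho> del1 x + \<rho> del1 y" "\<rho> del1 (s a x) = s a (\<rho> del1 x)" for x y a
      by (rule lin[OF sder_del1])+
    show "\<rho> del2 (x + y) = \<rho> del2 x + \<rho> del2 y" "\<rho> del2 (s a x) = s a (\<rho> del2 x)" for x y a
      by (rule lin[OF sder_del2])+
    show "\<rho> a2 (x + y) = \<rho> a2 x + \<rho> a2 y" "\<rho> a2 (s a x) = s a (\<rho> a2 x)" for x y a
      by (rule lin[OF sder_a2])+
    show "\<rho> k2 (x + y) = \<rho> k2 x + \<rho> k2 y" "\<rho> k2 (s a x) = s a (\<rho> k2 x)" for x y a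
      by (rule lin[OF sder_k2])+
    show "v \<in> Vg j i \<Longrightarrow> \<rho> del2 v \<in> Vg j (i+1)" for v i j
      using degree[OF sder_del2 e11d2 e22d2] by simp
    show "v \<in> Vg j i \<Longrightarrow> \<rho> del1 v \<in> Vg (j+1) i" for v i j
      using degree[OF sder_del1 e11d1 e22d1] by simp
    show "v \<in> Vg j i \<Longrightarrow> \<rho> a2 v \<in> Vg (j-1) (i+1)" for v i j
      using degree[OF sder_a2 e11a2 e22a2] by simp
    show "v \<in> Vg j i \<Longrightarrow> \<rho> k2 v \<in> Vg (j-1) i" for v i j
      using degree[OF sder_k2 e11k2 e22k2] by simp
    show "\<rho> del1 (\<rho> del1 v) = 0" for v by (rule sq0[OF sder_del1 B1 Der_odd[OF sder_del1]])
    show "\<rho> del2 (\<rho> del2 v) = 0" for v by (rule sq0[OF sder_del2 B2 Der_odd[OF sder_del2]])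
    show "\<rho> del2 (\<rho> del1 v) + \<rho> del1 (\<rho> del2 v) = 0" for v
      using anti0[OF sder_del1 sder_del2 B3 Der_odd[OF sder_del1], of v] by (simp add: add.commute)
    show "\<rho> a2 (\<rho> del1 v) - \<rho> del1 (\<rho> a2 v) = \<rho> del2 v" for v
      using comm[OF sder_a2 sder_del1 B7 Der_odd[OF sder_del2]] by simp
    show "\<rho> a2 (\<rho> del2 v) = \<rho> del2 (\<rho> a2 v)" for v
      using comm[OF sder_a2 sder_del2 B8 Der_odd[OF sder_del1]] by simp
    show "v \<in> Vg j i \<Longrightarrow> \<rho> del1 (\<rho> k2 v) + \<rho> k2 (\<rho> del1 v) = s (- 1 * of_int i) v" for v i j
    proof -
      assume v: "v \<in> Vg j i"
      define X where "X = \<rho> del1 (\<rho> k2 v)"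
      define Y where "Y = \<rho> k2 (\<rho> del1 v)"
      have "s 1 (\<rho> E22 v) = - (X - s (ssign True True) Y)"
        unfolding X_def Y_def by (rule br_rel[OF sder_del1 sder_k2 B9 Der_even[OF sder_E22]])
      moreover have "s (ssign True True) Y = - Y" by (simp add: ssign_def)
      ultimately have "s (of_int i) v = - (X + Y)" using Eact(2)[OF v] by simp
      hence "s (- 1 * of_int i) v = X + Y" by (simp add: scale_minus_left)
      thus ?thesis unfolding X_def Y_def by simp
    qed
    show "(- 1::'k) \<noteq> 0" by simp
  qed
  have e: "R.dT = (\<lambda>v. \<rho> del1 v + \<rho> del2 v)" by (simp add: R.dT_def fun_eq_iff add.commute)
  show ?thesis using R.main unfolding e Tot_swap col_swap by blast
qed

end

theorem corollary2p3p8: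
  fixes s :: "'k::field_char_0 \<Rightarrow> 'v::ab_group_add \<Rightarrow> 'v"
    and Vpar :: "bool \<Rightarrow> 'v set"
    and Vg :: "int \<Rightarrow> int \<Rightarrow> 'v set"
    and \<rho> :: "('k grass \<Rightarrow> 'k grass) \<Rightarrow> 'v \<Rightarrow> 'v"
  assumes "N2_susy_complex s Vpar Vg \<rho>"
    and "\<exists>N. \<forall>i j. i < N \<or> j < N \<longrightarrow> Vg i j = {0}"
  shows "quasi_isomorphic s (Tot s Vg) (\<lambda>v. \<rho> del1 v + \<rho> del2 v) (row0 Vg) (\<rho> del1)
       \<and> quasi_isomorphic s (Tot s Vg) (\<lambda>v. \<rho> del1 v + \<rho> del2 v) (col0 Vg) (\<rho> del2)"
proof -
  obtain N where bN: "\<forall>i j. i < N \<or> j < N \<longrightarrow> Vg i j = {0}" using assms(2) by blast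
  interpret n2 s Vpar Vg \<rho> N
    by unfold_locales (use assms(1) bN in auto)
  let ?R = "\<lambda>(A, dA) (B, dB). \<exists>f. quasi_iso s A dA B dB f"
  have r1: "?R (row0 Vg, \<rho> del1) (Tot s Vg, \<lambda>v. \<rho> del1 v + \<rho> del2 v)"
    using rowres by simp
  have r2: "?R (col0 Vg, \<rho> del2) (Tot s Vg, \<lambda>v. \<rho> del1 v + \<rho> del2 v)"
    using colres by simp
  show ?thesis unfolding quasi_isomorphic_def
    using equivclp_sym[OF r_into_equivclp[of ?R, OF r1]] equivclp_sym[OF r_into_equivclp[of ?R, OF r2]]
    by blast
qed

end
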